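(* Let $S_n(x)=(18n+24)\sin(x)-(9n+27)\sin((n+1)x)+9n\sin((n+2)x)+2\sin(4x)-\sin(5x)$. For every integer $n\geq 21$ and every $x\in\bigl(2.5/(n+2),\,2\pi/3\bigr)$ one has $S_n(x)>0$. *)

theory Defs
  imports Complex_Main
begin

definition S :: "nat \<Rightarrow> real \<Rightarrow> real" where
  "S n x = (18 * real n + 24) * sin x - (9 * real n + 27) * sin ((real n + 1) * x)
           + 9 * real n * sin ((real n + 2) * x) + 2 * sin (4 * x) - sin (5 * x)"

end

theory Submission
  imports Defs
begin


lemma cos_lower: "1 - y^2/2 \<le> cos (y::real)"
proof -
  have c: "cos y = 1 - 2 * sin (y/2) ^ 2" using cos_double_sin[of "y/2"] by simp
  have "\<bar>sin (y/2)\<bar> \<le> \<bar>y/2\<bar>" by (rule abs_sin_x_le_abs_x)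
  hence "sin (y/2) ^ 2 \<le> (y/2)^2"
    by (metis abs_le_square_iff)
  thus ?thesis using c by (simp add: power_divide)
qed

lemma sin_lower: assumes "0 \<le> (y::real)" shows "y - y^3/6 \<le> sin y"
proof -
  let ?f = "\<lambda>t::real. sin t - t + t^3/6"
  have d: "\<And>t. 0 \<le> t \<Longrightarrow> t \<le> y \<Longrightarrow> (?f has_real_derivative (cos t - 1 + t^2/2)) (at t)"
    by (auto intro!: derivative_eq_intros simp: field_simps power2_eq_square power3_eq_cube)
  have "?f 0 \<le> ?f y"
  proof (rule DERIV_nonneg_imp_nondecreasing[OF assms])
    fix t assume t: "0 \<le> t" "t \<le> y"
    show "\<exists>d. (?f has_real_derivative d) (at t) \<and> d \<ge> 0"
      using d[OF t] cos_lower[of t] by (intro exI[of _ "cos t - 1 + t^2/2"]) simp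
  qed
  thus ?thesis by simp
qed

lemma pi_lt: "pi < 3.15"
proof (rule ccontr)
  assume "\<not> pi < 3.15"
  hence h: "0.525 \<le> pi/6" by simp
  have "sin 0.525 \<le> sin (pi/6)"
    by (rule sin_monotone_2pi_le) (use h in auto)
  moreover have "sin (pi/6) = 1/2" by (simp add: sin_30)
  moreover have "0.525 - (0.525::real)^3/6 \<le> sin 0.525" by (rule sin_lower) simp
  moreover have "(525/1000::real) - (525/1000)^3/6 > 1/2" by (simp add: power3_eq_cube)
  ultimately show False by simp
qed

lemma freeu: assumes "(a::real) > 0" shows "a*cos u - b*sin u \<ge> -a - b^2/(2*a)"
proof -
  have "(a*sin u - b)^2 + a^2*(1+cos u)^2 = 2*a*(a*cos u - b*sin u) + 2*a^2 + b^2 + a^2*(sin u^2 + cos u^2 - 1)"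
    by algebra
  hence "2*a*(a*cos u - b*sin u) + 2*a^2 + b^2 = (a*sin u - b)^2 + a^2*(1+cos u)^2"
    by simp
  hence "0 \<le> 2*a*(a*cos u - b*sin u) + 2*a^2 + b^2" by simp
  moreover have "2*a*((a*cos u - b*sin u) + a + b^2/(2*a)) = 2*a*(a*cos u - b*sin u) + 2*a^2 + b^2"
    using assms by (simp add: field_simps power2_eq_square)
  ultimately have "0 \<le> 2*a*((a*cos u - b*sin u) + a + b^2/(2*a))" by simp
  hence "0 \<le> (a*cos u - b*sin u) + a + b^2/(2*a)" using assms by (simp add: zero_le_mult_iff)
  thus ?thesis by simp
qed

lemma decomp:
  fixes n :: nat and x :: real
  defines "m \<equiv> real n + 3/2"
  shows "S n x = 18*m*sin(x/2)*(2*cos(x/2) + cos(m*x)) - 27*cos(x/2)*sin(m*x)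
      + (-3*sin x + 2*sin(4*x) - sin(5*x))"
proof -
  have e1: "(real n + 1)*x = m*x - x/2" unfolding m_def by (simp add: algebra_simps)
  have e2: "(real n + 2)*x = m*x + x/2" unfolding m_def by (simp add: algebra_simps)
  have e3: "sin x = 2*sin(x/2)*cos(x/2)" using sin_double[of "x/2"] by simp
  show ?thesis unfolding S_def e1 e2 sin_diff sin_add
    apply (subst (1 2) e3) unfolding m_def by (simp add: algebra_simps)
qed


definition EE :: "real \<Rightarrow> real" where "EE x = -3*sin x + 2*sin(4*x) - sin(5*x)"

lemma LB:
  fixes n :: nat and x :: real
  defines "m \<equiv> real n + 3/2"
  assumes s: "0 < sin (x/2)"
  shows "S n x \<ge> 18*m*(sin x - sin(x/2)) - 81/4*cos(x/2)^2/(m*sin(x/2)) + EE x"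
proof -
  have m: "m > 0" unfolding m_def by simp
  have a: "18*m*sin(x/2) > 0" using m s by simp
  have f: "18*m*sin(x/2)*cos(m*x) - 27*cos(x/2)*sin(m*x) \<ge> -(18*m*sin(x/2)) - (27*cos(x/2))^2/(2*(18*m*sin(x/2)))"
    by (rule freeu[OF a])
  have e3: "sin x = 2*sin(x/2)*cos(x/2)" using sin_double[of "x/2"] by simp
  have q: "(27*cos(x/2))^2/(2*(18*m*sin(x/2))) = 81/4*cos(x/2)^2/(m*sin(x/2))"
    using m s by (simp add: power2_eq_square field_simps)
  have "S n x = 18*m*sin(x/2)*(2*cos(x/2)) + (18*m*sin(x/2)*cos(m*x) - 27*cos(x/2)*sin(m*x)) + EE x"
    unfolding decomp[of n x] m_def EE_def by (simp add: algebra_simps)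
  also have "18*m*sin(x/2)*(2*cos(x/2)) = 18*m*sin x" using e3 by simp
  finally have "S n x = 18*m*sin x + (18*m*sin(x/2)*cos(m*x) - 27*cos(x/2)*sin(m*x)) + EE x" .
  moreover have "18*m*(sin x - sin(x/2)) = 18*m*sin x - 18*m*sin(x/2)" by (simp add: algebra_simps)
  ultimately show ?thesis using f q by linarith
qed

lemma E_small: assumes "0 \<le> x" shows "EE x \<ge> -(64/3)*x^3"
proof -
  have "sin x \<le> x" using sin_x_le_x assms by simp
  moreover have "sin (5*x) \<le> 5*x" using sin_x_le_x assms by simp
  moreover have "4*x - (4*x)^3/6 \<le> sin (4*x)" using sin_lower[of "4*x"] assms by simp
  moreover have "(4*x)^3/6 = (32/3)*x^3" by (simp add: power_mult_distrib)
  ultimately show ?thesis unfolding EE_def by linarith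
qed



lemma E_end: assumes "0 \<le> h" "h \<le> 3/10" shows "EE (2*pi/3 - h) \<ge> -28*h^2"
proof -
  let ?r = "sqrt 3"
  have r: "?r \<le> 17321/10000" by (rule real_le_lsqrt) (auto simp: power2_eq_square)
  have s1: "sin (2*pi/3 - h) = ?r/2*cos h + 1/2*sin h"
    by (simp add: sin_diff sin_120 cos_120)
  have "sin (4*(2*pi/3 - h)) = sin ((2*pi/3 - 4*h) + 2*pi)"
    by (intro arg_cong[where f=sin]) (simp add: field_simps)
  also have "\<dots> = sin (2*pi/3 - 4*h)" by (rule sin_periodic)
  also have "\<dots> = ?r/2*cos (4*h) + 1/2*sin (4*h)" by (simp add: sin_diff sin_120 cos_120)
  finally have s4: "sin (4*(2*pi/3 - h)) = ?r/2*cos (4*h) + 1/2*sin (4*h)" .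
  have "sin (5*(2*pi/3 - h)) = sin ((- (2*pi/3 + 5*h) + 2*pi) + 2*pi)"
    by (intro arg_cong[where f=sin]) (simp add: field_simps)
  also have "\<dots> = sin (- (2*pi/3 + 5*h))" by (simp only: sin_periodic)
  also have "\<dots> = -(?r/2*cos (5*h) - 1/2*sin (5*h))" by (simp only: sin_minus sin_add sin_120 cos_120)
  finally have s5: "sin (5*(2*pi/3 - h)) = -(?r/2*cos (5*h) - 1/2*sin (5*h))" .
  have c1: "cos h \<le> 1" by simp
  have c4: "cos (4*h) \<ge> 1 - 8*h^2" using cos_lower[of "4*h"] by (simp add: power2_eq_square)
  have c5: "cos (5*h) \<ge> 1 - 12.5*h^2" using cos_lower[of "5*h"] by (simp add: power2_eq_square)
  have sh: "sin h \<le> h" using sin_x_le_x assms by simp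
  have sh5: "sin (5*h) \<le> 5*h" using sin_x_le_x assms by simp
  have sh4: "4*h - (4*h)^3/6 \<le> sin (4*h)" using sin_lower[of "4*h"] assms by simp
  have A: "-3*cos h + 2*cos(4*h) + cos(5*h) \<ge> -57/2*h^2" using c1 c4 c5 by linarith
  have B: "-3*sin h + 2*sin(4*h) - sin(5*h) \<ge> -(64/3)*h^3"
  proof -
    have "(4*h)^3/6 = (32/3)*h^3" by (simp add: power_mult_distrib)
    thus ?thesis using sh sh4 sh5 by linarith
  qed
  have eq: "EE (2*pi/3 - h) = ?r/2*(-3*cos h + 2*cos(4*h) + cos(5*h)) + 1/2*(-3*sin h + 2*sin(4*h) - sin(5*h))"
    unfolding EE_def s1 s4 s5 by (simp add: algebra_simps)
  define P where "P = -3*cos h + 2*cos(4*h) + cos(5*h)"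
  define Q where "Q = -3*sin h + 2*sin(4*h) - sin(5*h)"
  have e0: "?r/2*P \<ge> ?r/2*(-57/2*h^2)"
    using A unfolding P_def by (intro mult_left_mono) auto
  have e1: "?r/2*(-57/2*h^2) \<ge> -24683/1000*h^2"
  proof -
    have "?r*h^2 \<le> 17321/10000*h^2" by (rule mult_right_mono) (use r in auto)
    thus ?thesis using zero_le_power2[of h] by linarith
  qed
  have e2: "h^3 \<le> 3/10*h^2"
  proof -
    have "h*h^2 \<le> 3/10*h^2" by (rule mult_right_mono) (use assms in auto)
    thus ?thesis by (simp add: power3_eq_cube power2_eq_square)
  qed
  have e3: "EE (2*pi/3 - h) = ?r/2*P + 1/2*Q" using eq unfolding P_def Q_def .
  have e4: "Q \<ge> -(64/3)*h^3" using B unfolding Q_def .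
  show ?thesis using e0 e1 e2 e3 e4 zero_le_power2[of h] by linarith
qed




lemma regA:
  assumes n: "n \<ge> 21" and x0: "0 < x" and x1: "x \<le> 2/5" and u: "(real n + 3/2)*x \<ge> 244/100"
  shows "S n x > 0"
proof -
  define m where "m = real n + 3/2"
  have m: "m \<ge> 45/2" using n unfolding m_def by simp
  have um: "m*x \<ge> 244/100" using u unfolding m_def .
  have sge: "x/2 - (x/2)^3/6 \<le> sin (x/2)" using sin_lower[of "x/2"] x0 by simp
  have sle: "sin (x/2) \<le> x/2" using sin_x_le_x[of "x/2"] x0 by simp
  have sxg: "x - x^3/6 \<le> sin x" using sin_lower[of x] x0 by simp
  have x2: "x^2 \<le> 4/25"
  proof -
    have "x^2 \<le> (2/5)^2" by (rule power_mono) (use x0 x1 in auto)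
    thus ?thesis by (simp add: power2_eq_square)
  qed
  have x3: "x^3 \<le> 4/25 * x"
  proof -
    have "x^2 * x \<le> 4/25 * x" by (rule mult_right_mono) (use x2 x0 in auto)
    thus ?thesis by (simp add: power3_eq_cube power2_eq_square)
  qed
  have "(x/2)^3/6 = x^3/48" by (simp add: power_divide)
  hence s49: "sin (x/2) \<ge> 49/100*x" using sge x3 x0 by linarith
  have spos: "sin (x/2) > 0" using s49 x0 by linarith
  have L: "S n x \<ge> 18*m*(sin x - sin(x/2)) - 81/4*cos(x/2)^2/(m*sin(x/2)) + EE x"
    using LB[OF spos, of n] unfolding m_def by simp
  have F: "sin x - sin(x/2) \<ge> 71/150 * x" using sxg sle x3 by linarith
  have F2: "18*m*(sin x - sin(x/2)) \<ge> 18*m*(71/150 * x)"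
    by (rule mult_left_mono[OF F]) (use m in auto)
  have ms: "m*sin(x/2) \<ge> m*(49/100*x)" by (rule mult_left_mono[OF s49]) (use m in auto)
  have c2: "cos(x/2)^2 \<le> 1" using sin_cos_squared_add[of "x/2"] zero_le_power2[of "sin(x/2)"] by linarith
  have P: "81/4*cos(x/2)^2/(m*sin(x/2)) \<le> (81/4)/(49/100*(244/100))"
    by (rule frac_le) (use c2 ms um in auto)
  have E: "EE x \<ge> -(64/3)*x^3" by (rule E_small) (use x0 in auto)
  have A: "18*m*(sin x - sin(x/2)) \<ge> 213/25*(m*x)" using F2 by simp
  have A2: "213/25*(m*x) \<ge> 213/25*(244/100)" using um by simp
  have P2: "81/4*cos(x/2)^2/(m*sin(x/2)) \<le> 16938/1000"
    by (rule order_trans[OF P]) simp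
  have E2: "EE x \<ge> -(64/3)*(4/25*(2/5))" using E x3 x1 by simp
  show ?thesis using L A A2 P2 E2 by simp
qed


lemma cos_sq_le: "cos (y::real) ^ 2 \<le> 1"
  using sin_cos_squared_add[of y] zero_le_power2[of "sin y"] by linarith

lemma regB:
  assumes n: "n \<ge> 21" and x0: "2/5 \<le> x" and x1: "x \<le> 9/5"
  shows "S n x > 0"
proof -
  define m where "m = real n + 3/2"
  have m: "m \<ge> 45/2" using n unfolding m_def by simp
  have p2: "2 \<le> pi" by (rule pi_ge_two)
  have "sin (1/5) \<le> sin (x/2)"
    by (rule sin_monotone_2pi_le) (use x0 x1 p2 in auto)
  moreover have "1/5 - (1/5)^3/6 \<le> sin (1/5::real)" by (rule sin_lower) simp
  ultimately have s1: "sin (x/2) \<ge> 1986/10000" by (simp add: power3_eq_cube)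
  have "cos (9/10) \<le> cos (x/2)"
    by (rule cos_monotone_0_pi_le) (use x0 x1 p2 in auto)
  moreover have "1 - (9/10)^2/2 \<le> cos (9/10::real)" by (rule cos_lower)
  ultimately have c1: "cos (x/2) \<ge> 595/1000" by (simp add: power2_eq_square)
  have spos: "sin (x/2) > 0" using s1 by linarith
  have L: "S n x \<ge> 18*m*(sin x - sin(x/2)) - 81/4*cos(x/2)^2/(m*sin(x/2)) + EE x"
    using LB[OF spos, of n] unfolding m_def by simp
  have e3: "sin x = 2*sin(x/2)*cos(x/2)" using sin_double[of "x/2"] by simp
  have F: "sin x - sin(x/2) = sin(x/2)*(2*cos(x/2) - 1)" using e3 by (simp add: algebra_simps)
  have F1: "sin(x/2)*(2*cos(x/2) - 1) \<ge> 1986/10000 * (19/100)"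
    by (rule mult_mono) (use s1 c1 in auto)
  have F2: "18*m*(sin x - sin(x/2)) \<ge> 18*(45/2)*(1986/10000 * (19/100))"
    unfolding F by (rule mult_mono) (use F1 m in auto)
  have ms: "m*sin(x/2) \<ge> 45/2*(1986/10000)" by (rule mult_mono) (use s1 m in auto)
  have P: "81/4*cos(x/2)^2/(m*sin(x/2)) \<le> (81/4)/(45/2*(1986/10000))"
    by (rule frac_le) (use cos_sq_le[of "x/2"] ms in auto)
  have P2: "81/4*cos(x/2)^2/(m*sin(x/2)) \<le> 4533/1000"
    by (rule order_trans[OF P]) simp
  have E: "EE x \<ge> -6" unfolding EE_def using sin_le_one[of x] sin_ge_minus_one[of "4*x"] sin_le_one[of "5*x"] by linarith
  have F3: "18*(45/2)*(1986/10000 * (19/100)) \<ge> (15/1::real)" by simp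
  show ?thesis using L F2 F3 P2 E by linarith
qed


lemma half_formulas:
  shows "cos ((2*pi/3 - h)/2) = 1/2*cos(h/2) + sqrt 3/2*sin(h/2)"
    and "sin ((2*pi/3 - h)/2) = sqrt 3/2*cos(h/2) - 1/2*sin(h/2)"
proof -
  have e: "(2*pi/3 - h)/2 = pi/3 - h/2" by simp
  show "cos ((2*pi/3 - h)/2) = 1/2*cos(h/2) + sqrt 3/2*sin(h/2)"
    unfolding e cos_diff cos_60 sin_60 by simp
  show "sin ((2*pi/3 - h)/2) = sqrt 3/2*cos(h/2) - 1/2*sin(h/2)"
    unfolding e sin_diff cos_60 sin_60 by simp
qed

lemma sqrt3_ge: "sqrt 3 \<ge> (1732/1000::real)"
  by (rule real_le_rsqrt) (simp add: power2_eq_square)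

lemma sqrt3_le: "sqrt 3 \<le> (17321/10000::real)"
  by (rule real_le_lsqrt) (auto simp: power2_eq_square)

lemma twoc_lower:
  assumes h0: "0 \<le> h" and h1: "h \<le> 3/10"
  shows "2*cos((2*pi/3 - h)/2) - 1 \<ge> 82/100*h"
proof -
  have c: "cos(h/2) \<ge> 1 - h^2/8" using cos_lower[of "h/2"] by (simp add: power_divide)
  have sl: "sin(h/2) \<ge> h/2 - h^3/48" using sin_lower[of "h/2"] h0 by (simp add: power_divide)
  have h2: "h^2 \<le> 3/10*h"
  proof -
    have "h*h \<le> 3/10*h" by (rule mult_right_mono) (use h0 h1 in auto)
    thus ?thesis by (simp add: power2_eq_square)
  qed
  have h3: "h^3 \<le> 9/100*h"
  proof -
    have "h*h^2 \<le> 3/10*(3/10*h)" by (rule mult_mono) (use h0 h1 h2 in auto)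
    thus ?thesis by (simp add: power3_eq_cube power2_eq_square)
  qed
  have slp: "h/2 - h^3/48 \<ge> 0" using h3 h0 by linarith
  have "sqrt 3 * sin(h/2) \<ge> 1732/1000 * (h/2 - h^3/48)"
    by (rule mult_mono) (use sqrt3_ge sl slp in auto)
  moreover have "2*cos((2*pi/3 - h)/2) - 1 = cos(h/2) - 1 + sqrt 3 * sin(h/2)"
    unfolding half_formulas by simp
  moreover have "1732/1000*(h/2 - h^3/48) = 866/1000*h - 1732/48000*h^3" by (simp add: field_simps)
  ultimately show ?thesis using c h2 h3 h0 by linarith
qed

lemma regC:
  assumes n: "n \<ge> 21" and x0: "9/5 \<le> x" and x1: "x < 2*pi/3"
    and mh: "(real n + 3/2)*(2*pi/3 - x) \<ge> 1/5"
  shows "S n x > 0"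
proof -
  define m where "m = real n + 3/2"
  define h where "h = 2*pi/3 - x"
  have xh: "x = 2*pi/3 - h" unfolding h_def by simp
  have m: "m \<ge> 45/2" using n unfolding m_def by simp
  have mh': "m*h \<ge> 1/5" using mh unfolding m_def h_def .
  have p2: "2 \<le> pi" by (rule pi_ge_two)
  have h0: "0 < h" using x1 unfolding h_def by simp
  have h1: "h \<le> 3/10" using pi_lt x0 unfolding h_def by simp
  have "sin (9/10) \<le> sin (x/2)"
    by (rule sin_monotone_2pi_le) (use x0 x1 p2 in auto)
  moreover have "9/10 - (9/10)^3/6 \<le> sin (9/10::real)" by (rule sin_lower) simp
  ultimately have s1: "sin (x/2) \<ge> 7785/10000" by (simp add: power3_eq_cube)
  have "cos (x/2) \<le> cos (9/10)"
    by (rule cos_monotone_0_pi_le) (use x0 x1 p2 in auto)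
  moreover have "cos (9/10::real) \<le> 6219/10000"
  proof -
    have cd: "cos (9/10::real) = 1 - 2*sin(9/20)^2" using cos_double_sin[of "9/20::real"] by simp
    have "9/20 - (9/20)^3/6 \<le> sin (9/20::real)" by (rule sin_lower) simp
    hence "(4348/10000::real) \<le> sin (9/20)" by (simp add: power3_eq_cube)
    hence "(4348/10000::real)^2 \<le> sin (9/20)^2" by (rule power_mono) simp
    thus ?thesis using cd by (simp add: power2_eq_square)
  qed
  ultimately have c1: "cos (x/2) \<le> 6219/10000" by simp
  have c0: "cos (x/2) \<ge> 0" by (rule cos_ge_zero) (use x0 x1 p2 in auto)
  have c2: "cos (x/2)^2 \<le> 3868/10000"
  proof -
    have "cos (x/2)^2 \<le> (6219/10000)^2" by (rule power_mono) (use c0 c1 in auto)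
    thus ?thesis by (simp add: power2_eq_square)
  qed
  have spos: "sin (x/2) > 0" using s1 by linarith
  have L: "S n x \<ge> 18*m*(sin x - sin(x/2)) - 81/4*cos(x/2)^2/(m*sin(x/2)) + EE x"
    using LB[OF spos, of n] unfolding m_def by simp
  have e3: "sin x = 2*sin(x/2)*cos(x/2)" using sin_double[of "x/2"] by simp
  have F: "sin x - sin(x/2) = sin(x/2)*(2*cos(x/2) - 1)" using e3 by (simp add: algebra_simps)
  have tc: "2*cos(x/2) - 1 \<ge> 82/100*h" using twoc_lower[of h] h0 h1 unfolding xh by simp
  have F1: "sin(x/2)*(2*cos(x/2) - 1) \<ge> 7785/10000 * (82/100*h)"
    by (rule mult_mono) (use s1 tc h0 in auto)
  have F1': "sin(x/2)*(2*cos(x/2) - 1) \<ge> 638/1000*h" using F1 h0 by simp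
  have F2: "18*m*(sin x - sin(x/2)) \<ge> 18*m*(638/1000*h)"
    unfolding F by (rule mult_left_mono) (use F1' m in auto)
  have F3: "18*m*(638/1000*h) = 11484/1000*(m*h)" by simp
  have ms: "m*sin(x/2) \<ge> 45/2*(7785/10000)" by (rule mult_mono) (use s1 m in auto)
  have P: "81/4*cos(x/2)^2/(m*sin(x/2)) \<le> (81/4*(3868/10000))/(45/2*(7785/10000))"
    by (rule frac_le) (use c2 ms in auto)
  have P2: "81/4*cos(x/2)^2/(m*sin(x/2)) \<le> 4472/10000"
    by (rule order_trans[OF P]) simp
  have E: "EE x \<ge> -28*h^2" unfolding xh by (rule E_end) (use h0 h1 in auto)
  have E2: "h^2 \<le> 3/10*h"
  proof -
    have "h*h \<le> 3/10*h" by (rule mult_right_mono) (use h0 h1 in auto)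
    thus ?thesis by (simp add: power2_eq_square)
  qed
  have mh2: "m*h \<ge> 45/2*h" by (rule mult_right_mono) (use m h0 in auto)
  show ?thesis using L F2 F3 P2 E E2 mh2 mh' by linarith
qed




lemma per: assumes "u = w + 2*pi*real_of_int k" shows "cos u = cos w" "sin u = sin w"
  using sin_cos_eq_iff[of u w] assms by (metis mult.commute)+

lemma regD_common:
  assumes n: "n \<ge> 21" and h0: "0 < h" and mh: "(real n + 3/2)*h < 1/5"
  defines "m \<equiv> real n + 3/2"
  shows "m \<ge> 45/2" "h \<le> 1/100" "sin((2*pi/3 - h)/2) \<ge> sqrt 3/2 - h/2"
    "sin((2*pi/3 - h)/2) \<ge> 4/5" "cos((2*pi/3 - h)/2) \<le> 1/2 + h/2"
    "cos((2*pi/3 - h)/2) \<ge> 49/100"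
proof -
  show m: "m \<ge> 45/2" using n unfolding m_def by simp
  have "45/2*h \<le> m*h" by (rule mult_right_mono) (use m h0 in auto)
  thus h1: "h \<le> 1/100" using mh unfolding m_def by linarith
  have c: "cos(h/2) \<ge> 1 - h^2/8" using cos_lower[of "h/2"] by (simp add: power_divide)
  have sl: "sin(h/2) \<le> h/2" using sin_x_le_x[of "h/2"] h0 by simp
  have sg: "sin(h/2) \<ge> 0" by (rule sin_ge_zero) (use h0 h1 pi_ge_two in auto)
  have h2: "h^2 \<le> h/100"
  proof -
    have "h*h \<le> 1/100*h" by (rule mult_right_mono) (use h0 h1 in auto)
    thus ?thesis by (simp add: power2_eq_square)
  qed
  have r1: "sqrt 3 \<le> 2" using sqrt3_le by simp
  have r0: "sqrt 3 \<ge> 0" by simp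
  have a1: "sqrt 3/2*cos(h/2) \<ge> sqrt 3/2*(1 - h^2/8)" by (rule mult_left_mono) (use c in auto)
  have a2: "sqrt 3/2*(1 - h^2/8) = sqrt 3/2 - sqrt 3 * h^2/16" by (simp add: algebra_simps)
  have a3: "sqrt 3 * h^2 \<le> 2*h^2" by (rule mult_right_mono) (use r1 in auto)
  show s: "sin((2*pi/3 - h)/2) \<ge> sqrt 3/2 - h/2"
    unfolding half_formulas using a1 a2 a3 sl h2 h0 by linarith
  thus "sin((2*pi/3 - h)/2) \<ge> 4/5" using sqrt3_ge h1 by linarith
  have b1: "sqrt 3/2*sin(h/2) \<le> 2/2*(h/2)" by (rule mult_mono) (use r1 sl sg in auto)
  show "cos((2*pi/3 - h)/2) \<le> 1/2 + h/2"
    unfolding half_formulas using cos_le_one[of "h/2"] b1 by linarith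
  have b2: "sqrt 3/2*sin(h/2) \<ge> 0" using sg by simp
  show "cos((2*pi/3 - h)/2) \<ge> 49/100"
    unfolding half_formulas using c b2 h2 h1 h0 by linarith
qed


lemma regD_pos:
  assumes n: "n \<ge> 21" and h0: "0 < h" and mh: "(real n + 3/2)*h < 1/5"
    and cu: "cos ((real n + 3/2)*(2*pi/3 - h)) \<ge> 0"
  shows "S n (2*pi/3 - h) > 0"
proof -
  define m where "m = real n + 3/2"
  define x where "x = 2*pi/3 - h"
  define s where "s = sin(x/2)"
  define c where "c = cos(x/2)"
  define u where "u = m*x"
  note R = regD_common[OF n h0 mh]
  have m: "m \<ge> 45/2" using R(1) unfolding m_def .
  have h1: "h \<le> 1/100" using R(2) .
  have s1: "s \<ge> 4/5" using R(4) unfolding s_def x_def .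
  have c1: "c \<le> 1/2 + h/2" using R(5) unfolding c_def x_def .
  have c0: "c \<ge> 49/100" using R(6) unfolding c_def x_def .
  have cu': "cos u \<ge> 0" using cu unfolding u_def m_def x_def .
  have D: "S n x = 18*m*s*(2*c + cos u) - 27*c*sin u + EE x"
    unfolding decomp[of n x] m_def s_def c_def u_def EE_def by simp
  have ms: "m*s \<ge> 45/2*(4/5)" by (rule mult_mono) (use m s1 in auto)
  have t: "(m*s)*(2*c + cos u) \<ge> 45/2*(4/5)*(2*(49/100))"
    by (rule mult_mono) (use ms c0 cu' in auto)
  have t2: "18*m*s*(2*c + cos u) = 18*((m*s)*(2*c + cos u))" by (simp add: algebra_simps)
  have cs: "c*sin u \<le> c*1" by (rule mult_left_mono) (use c0 in auto)
  have E: "EE x \<ge> -28*h^2" unfolding x_def by (rule E_end) (use h0 h1 in auto)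
  have h2: "h^2 \<le> 1"
  proof -
    have "h^2 \<le> 1^2" by (rule power_mono) (use h0 h1 in auto)
    thus ?thesis by simp
  qed
  have "S n x > 0" using D t t2 cs c1 h1 E h2 by simp
  thus ?thesis unfolding x_def .
qed


lemma regD_zero:
  assumes n: "n \<ge> 21" and h0: "0 < h" and mh: "(real n + 3/2)*h < 1/5"
    and cu: "cos ((real n + 3/2)*(2*pi/3 - h)) = - cos ((real n + 3/2)*h)"
    and su: "sin ((real n + 3/2)*(2*pi/3 - h)) = sin ((real n + 3/2)*h)"
  shows "S n (2*pi/3 - h) > 0"
proof -
  define m where "m = real n + 3/2"
  define x where "x = 2*pi/3 - h"
  define s where "s = sin(x/2)"
  define c where "c = cos(x/2)"
  define v where "v = m*h"
  define r where "r = sqrt 3"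
  define X where "X = m*h^2"
  define Y where "Y = m*v^2"
  note R = regD_common[OF n h0 mh]
  have m: "m \<ge> 45/2" using R(1) unfolding m_def .
  have h1: "h \<le> 1/100" using R(2) .
  have sge: "s \<ge> r/2 - h/2" using R(3) unfolding s_def x_def r_def .
  have s1: "s \<ge> 4/5" using R(4) unfolding s_def x_def .
  have c1: "c \<le> 1/2 + h/2" using R(5) unfolding c_def x_def .
  have c0: "c \<ge> 49/100" using R(6) unfolding c_def x_def .
  have v0: "0 < v" unfolding v_def using m h0 by simp
  have v1: "v < 1/5" using mh unfolding v_def m_def .
  have r2: "r*r = 3" unfolding r_def by simp
  have rl: "r \<le> 17321/10000" unfolding r_def by (rule sqrt3_le)
  have rg: "r \<ge> 1732/1000" unfolding r_def by (rule sqrt3_ge)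
  have D: "S n x = 18*m*s*(2*c - cos v) - 27*c*sin v + EE x"
    using decomp[of n x] cu su unfolding m_def s_def c_def v_def EE_def x_def by simp
  have tdef: "2*c - 1 = cos(h/2) - 1 + r*sin(h/2)"
    unfolding c_def x_def r_def half_formulas by simp
  have ch: "cos(h/2) \<ge> 1 - h^2/8" using cos_lower[of "h/2"] by (simp add: power_divide)
  have sh: "sin(h/2) \<ge> h/2 - h^3/48" using sin_lower[of "h/2"] h0 by (simp add: power_divide)
  have rsh: "r*sin(h/2) \<ge> r*(h/2 - h^3/48)" by (rule mult_left_mono[OF sh]) (use rg in auto)
  define t0 where "t0 = r*h/2 - r*h^3/48 - h^2/8"
  have tt0: "2*c - 1 \<ge> t0" using tdef ch rsh unfolding t0_def by (simp add: algebra_simps)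
  have h2: "h^2 \<le> h/100"
  proof -
    have "h*h \<le> 1/100*h" by (rule mult_right_mono) (use h0 h1 in auto)
    thus ?thesis by (simp add: power2_eq_square)
  qed
  have h3: "h^3 \<le> h/100"
  proof -
    have "h*h^2 \<le> 1*(h/100)" by (rule mult_mono) (use h0 h1 h2 in auto)
    thus ?thesis by (simp add: power3_eq_cube power2_eq_square)
  qed
  have rh: "r*h \<ge> 1732/1000*h" by (rule mult_right_mono) (use rg h0 in auto)
  have rh3: "r*h^3 \<le> 2*h^3" by (rule mult_right_mono) (use rl h0 in auto)
  have t00: "t0 \<ge> 0" unfolding t0_def using rh rh3 h2 h3 h0 by linarith
  define s0 where "s0 = r/2 - h/2"
  have st: "s*(2*c - 1) \<ge> s0*t0" by (rule mult_mono) (use sge tt0 s1 t00 in \<open>auto simp: s0_def\<close>)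
  have s0t0: "s0*t0 = 3*h/4 + h^3/32 - 5*r*h^2/16 + r*h^4/96"
  proof -
    have "s0*t0 = (r*r)*h/4 - (r*r)*h^3/96 - 5*r*h^2/16 + r*h^4/96 + h^3/16"
      unfolding s0_def t0_def by (simp add: field_simps power2_eq_square power3_eq_cube power4_eq_xxxx)
    thus ?thesis unfolding r2 by (simp add: field_simps)
  qed
  have rh2: "r*h^2 \<le> 17321/10000*h^2" by (rule mult_right_mono) (use rl in auto)
  have rh4: "r*h^4 \<ge> 0" using rg h0 by simp
  have st2: "s*(2*c - 1) \<ge> 3/4*h - 55/100*h^2"
  proof -
    have "0 \<le> h^3" using h0 by simp
    moreover have "5*r*h^2/16 = 5/16*(r*h^2)" by simp
    moreover have "r*h^4/96 = 1/96*(r*h^4)" by simp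
    ultimately show ?thesis using st s0t0 rh2 rh4 zero_le_power2[of h] by linarith
  qed
  have P: "m*(s*(2*c - 1)) \<ge> m*(3/4*h - 55/100*h^2)" by (rule mult_left_mono[OF st2]) (use m in auto)
  have P2: "m*(3/4*h - 55/100*h^2) = 3/4*v - 55/100*X" unfolding v_def X_def by (simp add: algebra_simps)
  have cv: "1 - cos v = 2*sin(v/2)^2" using cos_double_sin[of "v/2"] by simp
  have sv: "sin(v/2) \<ge> v/2 - v^3/48" using sin_lower[of "v/2"] v0 by (simp add: power_divide)
  have v3: "v^3 \<le> v/25"
  proof -
    have "v^2 \<le> (1/5)^2" by (rule power_mono) (use v0 v1 in auto)
    hence "v*v^2 \<le> v*(1/25)" by (intro mult_left_mono) (use v0 in \<open>auto simp: power2_eq_square\<close>)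
    thus ?thesis by (simp add: power3_eq_cube power2_eq_square)
  qed
  have sv2: "sin(v/2) \<ge> 495/1000*v" using sv v3 v0 by linarith
  have "(495/1000*v)^2 \<le> sin(v/2)^2" by (rule power_mono[OF sv2]) (use v0 in auto)
  moreover have "(495/1000*v)^2 = 9801/40000*v^2" by (simp add: power2_eq_square)
  ultimately have cv2: "1 - cos v \<ge> 49/100*v^2" using cv zero_le_power2[of v] by linarith
  have Q0: "s*(1 - cos v) \<ge> 4/5*(49/100*v^2)" by (rule mult_mono) (use s1 cv2 in auto)
  have Q: "m*(s*(1 - cos v)) \<ge> m*(4/5*(49/100*v^2))" by (rule mult_left_mono[OF Q0]) (use m in auto)
  have Q2: "m*(4/5*(49/100*v^2)) = 98/250*Y" unfolding Y_def by (simp add: algebra_simps)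
  have R1: "c*sin v \<le> c*v" by (rule mult_left_mono) (use sin_x_le_x[of v] v0 c0 in auto)
  have R2: "c*v \<le> (1/2 + h/2)*v" by (rule mult_right_mono[OF c1]) (use v0 in auto)
  have R3: "(1/2 + h/2)*v = v/2 + X/2" unfolding X_def v_def by (simp add: algebra_simps power2_eq_square)
  have E: "EE x \<ge> -28*h^2" unfolding x_def by (rule E_end) (use h0 h1 in auto)
  have mm: "m*m \<ge> 45/2*(45/2)" by (rule mult_mono) (use m in auto)
  have X0: "X > 0" unfolding X_def using m h0 by simp
  have YX: "Y = (m*m)*X" unfolding Y_def X_def v_def by (simp add: power2_eq_square algebra_simps)
  have YX2: "(m*m)*X \<ge> 45/2*(45/2)*X" by (rule mult_right_mono[OF mm]) (use X0 in auto)
  have Xh: "X \<ge> 45/2*h^2" unfolding X_def by (rule mult_right_mono[OF m]) simp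
  have SS: "S n x = 18*(m*(s*(2*c - 1))) + 18*(m*(s*(1 - cos v))) - 27*(c*sin v) + EE x"
    unfolding D by (simp add: algebra_simps)
  have "S n x > 0" using SS P P2 Q Q2 R1 R2 R3 E YX YX2 Xh X0 by linarith
  thus ?thesis unfolding x_def .
qed


theorem mainTheorem15:
  fixes n :: nat and x :: real
  assumes "n \<ge> 21"
    and "2.5 / (real n + 2) < x" and "x < 2 * pi / 3"
  shows "S n x > 0"
proof -
  note n = assms(1)
  have np: "real n + 2 > 0" by simp
  have nx: "(real n + 2)*x > 5/2"
    using assms(2) np by (simp add: divide_less_eq algebra_simps)
  have x0: "x > 0"
  proof -
    have "2.5 / (real n + 2) > 0" using np by simp
    thus ?thesis using assms(2) by linarith
  qed
  define m where "m = real n + 3/2"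
  have mge: "m \<ge> 45/46*(real n + 2)" unfolding m_def using n by simp
  have mx: "m*x \<ge> 45/46*((real n + 2)*x)"
  proof -
    have "m*x \<ge> (45/46*(real n + 2))*x" by (rule mult_right_mono[OF mge]) (use x0 in auto)
    thus ?thesis by (simp add: algebra_simps)
  qed
  have mx2: "(real n + 3/2)*x \<ge> 244/100" using mx nx unfolding m_def by linarith
  show ?thesis
  proof (cases "x \<le> 2/5")
    case True
    show ?thesis using regA[OF n x0 True mx2] .
  next
    case F1: False
    show ?thesis
    proof (cases "x \<le> 9/5")
      case True
      thus ?thesis using regB[OF n _ True] F1 by simp
    next
      case F2: False
      show ?thesis
      proof (cases "(real n + 3/2)*(2*pi/3 - x) \<ge> 1/5")
        case True
        thus ?thesis using regC[OF n _ assms(3) True] F2 by simp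
      next
        case F3: False
        define h where "h = 2*pi/3 - x"
        have h0: "0 < h" unfolding h_def using assms(3) by simp
        have mh: "(real n + 3/2)*h < 1/5" using F3 unfolding h_def by simp
        have xh: "x = 2*pi/3 - h" unfolding h_def by simp
        define k where "k = n div 3"
        define v where "v = (real n + 3/2)*h"
        have v0: "0 < v" unfolding v_def using h0 by simp
        have v1: "v < 1/5" unfolding v_def using mh .
        have p2: "2 \<le> pi" by (rule pi_ge_two)
        have nk: "n = 3*k + n mod 3" unfolding k_def by simp
        have U: "(real n + 3/2)*(2*pi/3 - h) = (real n + 3/2)*(2*pi/3) - v" unfolding v_def
          by (simp add: algebra_simps)
        have "n mod 3 = 0 \<or> n mod 3 = 1 \<or> n mod 3 = 2" by auto
        moreover {
          assume r: "n mod 3 = 0"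
          have rn: "real n = 3*real k" using arg_cong[OF nk, of real] r by simp
          have "(real n + 3/2)*(2*pi/3 - h) = (pi - v) + 2*pi*real_of_int (int k)"
            unfolding U by (simp add: rn algebra_simps)
          note P = per[OF this]
          have c: "cos ((real n + 3/2)*(2*pi/3 - h)) = - cos ((real n + 3/2)*h)"
            using P(1) unfolding v_def by simp
          have s: "sin ((real n + 3/2)*(2*pi/3 - h)) = sin ((real n + 3/2)*h)"
            using P(2) unfolding v_def by simp
          have "S n (2*pi/3 - h) > 0" by (rule regD_zero[OF n h0 mh c s])
        }
        moreover {
          assume r: "n mod 3 = 1"
          have rn: "real n = 3*real k + 1" using arg_cong[OF nk, of real] r by simp
          have "(real n + 3/2)*(2*pi/3 - h) = (-(pi/3) - v) + 2*pi*real_of_int (int k + 1)"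
            unfolding U by (simp add: rn algebra_simps)
          note P = per[OF this]
          have "cos (-(pi/3) - v) \<ge> 0" by (rule cos_ge_zero) (use v0 v1 p2 in auto)
          hence "S n (2*pi/3 - h) > 0"
            by (intro regD_pos[OF n h0 mh]) (use P in simp)
        }
        moreover {
          assume r: "n mod 3 = 2"
          have rn: "real n = 3*real k + 2" using arg_cong[OF nk, of real] r by simp
          have "(real n + 3/2)*(2*pi/3 - h) = (pi/3 - v) + 2*pi*real_of_int (int k + 1)"
            unfolding U by (simp add: rn algebra_simps)
          note P = per[OF this]
          have "cos (pi/3 - v) \<ge> 0" by (rule cos_ge_zero) (use v0 v1 p2 in auto)
          hence "S n (2*pi/3 - h) > 0"
            by (intro regD_pos[OF n h0 mh]) (use P in simp)
        }
        ultimately have "S n (2*pi/3 - h) > 0" by argo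
        thus ?thesis using xh by simp
      qed
    qed
  qed
qed


end
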